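(* Let $a:[0,\infty)\to[0,\infty)$ be non-negative and non-decreasing, let $f(x)=\exp(-\int_0^x a(y)dy)$, and for $s\ge1$ let $q_s(n)=\prod_{k=0}^n\bigl(1+\tfrac1{\sqrt s}a\bigl(\tfrac{k+1}{\sqrt s}\bigr)\bigr)^{-1}$, $n\in\mathbb N_0$. Then there is an increasing function $\psi(s)$ of $s\ge1$ with $\psi(s)\to\infty$ as $s\to\infty$ such that $q_s(n)=f\bigl(\tfrac{n+1}{\sqrt s}\bigr)\bigl(1+O(s^{-1/4})\bigr)$ for $0\le n+1\le\sqrt s\,\psi(s)$.
   Context: $q_s(n)=p_s(0)\cdots p_s(n)$ for the local admission control $p_s(k)=\bigl(1+\tfrac1{\sqrt s}a(\tfrac{k+1}{\sqrt s})\bigr)^{-1}$ of an $s$-server system. *)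

theory Defs
  imports "HOL-Analysis.Analysis"
begin

definition admission_f :: "(real \<Rightarrow> real) \<Rightarrow> real \<Rightarrow> real" where
  "admission_f a x = exp (- integral {0..x} a)"

definition admission_q :: "(real \<Rightarrow> real) \<Rightarrow> real \<Rightarrow> nat \<Rightarrow> real" where
  "admission_q a s n = (\<Prod>k\<in>{0..n}. inverse (1 + a ((real k + 1) / sqrt s) / sqrt s))"

end

theory Submission imports Defs "HOL-Analysis.Equivalence_Measurable_On_Borel" begin

lemma int_ok:
  fixes a :: "real \<Rightarrow> real"
  assumes mono: "mono_on {0..} a" and "0 \<le> c"
  shows "a integrable_on {c..d}"
  by (rule integrable_on_mono_on, rule mono_on_subset[OF mono]) (use assms in auto)

lemma piece_bounds:
  fixes a :: "real \<Rightarrow> real"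
  assumes mono: "mono_on {0..} a" and c: "0 \<le> c" and cd: "c \<le> d"
  shows "a c * (d - c) \<le> integral {c..d} a" "integral {c..d} a \<le> a d * (d - c)"
proof -
  have i: "a integrable_on {c..d}" by (rule int_ok[OF mono c])
  have "integral {c..d} (\<lambda>x. a c) \<le> integral {c..d} a"
    by (rule integral_le) (use i c cd in \<open>auto intro!: mono_onD[OF mono]\<close>)
  thus "a c * (d - c) \<le> integral {c..d} a" using cd by (simp add: mult.commute)
  have "integral {c..d} a \<le> integral {c..d} (\<lambda>x. a d)"
    by (rule integral_le) (use i c cd in \<open>auto intro!: mono_onD[OF mono]\<close>)
  thus "integral {c..d} a \<le> a d * (d - c)" using cd by (simp add: mult.commute)
qed

lemma sum_bounds:
  fixes a :: "real \<Rightarrow> real"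
  assumes mono: "mono_on {0..} a" and h: "0 < h"
  shows "(\<Sum>k\<in>{0..n}. a (real k * h) * h) \<le> integral {0..(real n + 1) * h} a \<and>
         integral {0..(real n + 1) * h} a \<le> (\<Sum>k\<in>{0..n}. a ((real k + 1) * h) * h)"
proof (induction n)
  case 0
  show ?case using piece_bounds[OF mono, of 0 h] h by simp
next
  case (Suc n)
  have c: "integral {0..(real n + 1) * h} a + integral {(real n + 1) * h..(real (Suc n) + 1) * h} a
     = integral {0..(real (Suc n) + 1) * h} a"
    using Henstock_Kurzweil_Integration.integral_combine[where f=a and a=0 and c="(real n + 1) * h" and b="(real (Suc n) + 1) * h"] h int_ok[OF mono, of 0 "(real (Suc n) + 1) * h"] by auto
  have p: "a ((real n + 1) * h) * h \<le> integral {(real n + 1) * h..(real (Suc n) + 1) * h} a"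
          "integral {(real n + 1) * h..(real (Suc n) + 1) * h} a \<le> a ((real (Suc n) + 1) * h) * h"
    using piece_bounds[OF mono, of "(real n + 1) * h" "(real (Suc n) + 1) * h"] h
    by (auto simp: algebra_simps)
  show ?case using Suc.IH c p by (simp add: add.commute)
qed

lemma shift_sum:
  fixes g :: "nat \<Rightarrow> real"
  shows "(\<Sum>k\<in>{0..n}. g k) + g (Suc n) = g 0 + (\<Sum>k\<in>{0..n}. g (Suc k))"
  by (induction n) (auto simp: sum.atLeast0_atMost_Suc)

lemma est:
  fixes a :: "real \<Rightarrow> real"
  assumes nonneg: "\<And>x. x \<ge> 0 \<Longrightarrow> a x \<ge> 0"
    and mono: "mono_on {0..} a"
    and h: "0 < h" and xm: "(real n + 1) * h \<le> m"
    and d1: "a m * h \<le> \<delta>" and d2: "(real n + 1) * (a m * h)^2 \<le> \<delta>" and d3: "\<delta> \<le> 1"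
  shows "\<bar>(\<Prod>k\<in>{0..n}. inverse (1 + a ((real k + 1) * h) * h)) - exp (- integral {0..(real n + 1) * h} a)\<bar>
     \<le> 2 * \<delta> * exp (- integral {0..(real n + 1) * h} a)"
proof -
  define I where "I = integral {0..(real n + 1) * h} a"
  define u where "u k = a ((real k + 1) * h) * h" for k :: nat
  define S where "S = (\<Sum>k\<in>{0..n}. u k)"
  define E where "E = (\<Sum>k\<in>{0..n}. (u k)^2)"
  define q where "q = (\<Prod>k\<in>{0..n}. inverse (1 + u k))"
  have "0 \<le> (real n + 1) * h" using h by simp
  hence m0: "0 \<le> m" using xm by linarith
  have u0: "0 \<le> u k" for k unfolding u_def using nonneg h by simp
  have uM: "u k \<le> a m * h" if "k \<le> n" for k
  proof -
    have kk: "(real k + 1) * h \<le> (real n + 1) * h" using that h by simp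
    have km: "(real k + 1) * h \<le> m" using kk xm by linarith
    have "a ((real k + 1) * h) \<le> a m" using km h m0 by (intro mono_onD[OF mono]) auto
    thus ?thesis unfolding u_def using h by simp
  qed
  have "0 \<le> a m * h" using nonneg[OF m0] h by simp
  hence dpos: "0 \<le> \<delta>" using d1 by linarith
  have sb: "(\<Sum>k\<in>{0..n}. a (real k * h) * h) \<le> I" "I \<le> S"
    using sum_bounds[OF mono h, of n] unfolding I_def S_def u_def by auto
  have sh: "(\<Sum>k\<in>{0..n}. a (real k * h) * h) + a (real (Suc n) * h) * h = a (real 0 * h) * h + S"
    using shift_sum[of "\<lambda>k. a (real k * h) * h" n] unfolding S_def u_def by (simp add: add.commute)
  have "real (Suc n) * h \<le> m" using xm by (simp add: add.commute)
  hence "a (real (Suc n) * h) \<le> a m" using h m0 by (intro mono_onD[OF mono]) auto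
  hence t1: "a (real (Suc n) * h) * h \<le> a m * h" using h by (simp add: mult_right_mono)
  have t2: "0 \<le> a (real 0 * h) * h" using nonneg h by simp
  have IS: "S - \<delta> \<le> I" using sb(1) sh d1 t1 t2 by linarith
  have E: "E \<le> \<delta>"
  proof -
    have "E \<le> (\<Sum>k\<in>{0..n}. (a m * h)^2)" unfolding E_def
      by (rule sum_mono) (use uM u0 in \<open>auto intro: power_mono\<close>)
    also have "\<dots> = (real n + 1) * (a m * h)^2" by simp
    finally show ?thesis using d2 by simp
  qed
  have qlo: "exp (- S) \<le> q"
  proof -
    have "exp (- S) = (\<Prod>k\<in>{0..n}. exp (- u k))" unfolding S_def
      by (simp add: exp_sum[symmetric] sum_negf)
    also have "\<dots> \<le> q" unfolding q_def
    proof (rule prod_mono)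
      fix k assume "k \<in> {0..n}"
      have "1 + u k \<le> exp (u k)" by (rule exp_ge_add_one_self_aux) (use u0 in auto)
      hence "inverse (exp (u k)) \<le> inverse (1 + u k)" using u0[of k]
        by (intro le_imp_inverse_le) auto
      thus "0 \<le> exp (- u k) \<and> exp (- u k) \<le> inverse (1 + u k)" by (simp add: exp_minus)
    qed
    finally show ?thesis .
  qed
  have qhi: "q \<le> exp (- S + E)"
  proof -
    have "q \<le> (\<Prod>k\<in>{0..n}. exp (- u k + (u k)^2))" unfolding q_def
    proof (rule prod_mono)
      fix k assume k: "k \<in> {0..n}"
      have uk1: "u k \<le> 1" using uM[of k] k d1 d3 by auto
      have "u k - (u k)^2 \<le> ln (1 + u k)" by (rule ln_one_plus_pos_lower_bound) (use u0 uk1 in auto)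
      have "exp (u k - (u k)^2) \<le> 1 + u k"
      proof -
        have "exp (u k - (u k)^2) \<le> exp (ln (1 + u k))" using \<open>u k - (u k)^2 \<le> ln (1 + u k)\<close> by simp
        also have "\<dots> = 1 + u k" using u0[of k] by simp
        finally show ?thesis .
      qed
      hence "inverse (1 + u k) \<le> inverse (exp (u k - (u k)^2))"
        by (intro le_imp_inverse_le) auto
      thus "0 \<le> inverse (1 + u k) \<and> inverse (1 + u k) \<le> exp (- u k + (u k)^2)"
        using u0[of k] by (simp add: exp_minus[symmetric])
    qed
    also have "\<dots> = exp (- S + E)" unfolding S_def E_def
      by (simp add: exp_sum[symmetric] sum.distrib sum_negf sum_subtractf)
    finally show ?thesis .
  qed
  have q1: "exp (- \<delta>) * exp (- I) \<le> q"
  proof -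
    have "- \<delta> + - I \<le> - S" using IS by linarith
    hence "exp (- \<delta> + - I) \<le> exp (- S)" by (simp only: exp_le_cancel_iff)
    moreover have "exp (- \<delta>) * exp (- I) = exp (- \<delta> + - I)" by (simp only: exp_add)
    ultimately show ?thesis using qlo by linarith
  qed
  have q2: "q \<le> exp \<delta> * exp (- I)"
  proof -
    have "- S + E \<le> \<delta> + - I" using sb(2) E by simp
    hence "exp (- S + E) \<le> exp (\<delta> + - I)" by (simp only: exp_le_cancel_iff)
    moreover have "exp \<delta> * exp (- I) = exp (\<delta> + - I)" by (simp only: exp_add)
    ultimately show ?thesis using qhi by linarith
  qed
  have e1: "exp \<delta> \<le> 1 + 2 * \<delta>"
  proof -
    have "\<delta> * \<delta> \<le> 1 * \<delta>" using d3 dpos by (rule mult_right_mono)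
    thus ?thesis using exp_bound[OF dpos d3] by (simp add: power2_eq_square)
  qed
  have e2: "1 - \<delta> \<le> exp (- \<delta>)" using exp_ge_add_one_self[of "-\<delta>"] by simp
  have f0: "0 < exp (- I)" by simp
  have "q - exp (- I) \<le> 2 * \<delta> * exp (- I)"
    using q2 mult_right_mono[OF e1 less_imp_le[OF f0]] by (simp add: algebra_simps)
  moreover have "exp (- I) - q \<le> 2 * \<delta> * exp (- I)"
  proof -
    have "(1 - \<delta>) * exp (- I) \<le> exp (- \<delta>) * exp (- I)" using mult_right_mono[OF e2 less_imp_le[OF f0]] .
    moreover have "0 \<le> \<delta> * exp (- I)" using dpos f0 by simp
    ultimately show ?thesis using q1 by (simp add: algebra_simps)
  qed
  ultimately show ?thesis unfolding q_def u_def I_def by (simp add: abs_le_iff)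
qed


lemma r_facts:
  fixes s :: real assumes s: "1 \<le> s"
  shows "sqrt s = (s powr (1/4))^2" "s powr (-1/4) = 1 / s powr (1/4)" "1 \<le> s powr (1/4)"
proof -
  have e: "(1/4::real) + 1/4 = 1/2" by simp
  have "(s powr (1/4))^2 = s powr (1/4) * s powr (1/4)" by (simp only: power2_eq_square)
  also have "\<dots> = s powr ((1/4) + (1/4))" by (simp only: powr_add)
  also have "\<dots> = s powr (1/2)" by (simp only: e)
  also have "\<dots> = sqrt s" using s by (intro powr_half_sqrt) simp
  finally show "sqrt s = (s powr (1/4))^2" by simp
  have "s powr (-1/4) = s powr (- (1/4))" by simp
  also have "\<dots> = inverse (s powr (1/4))" by (rule powr_minus)
  finally show "s powr (-1/4) = 1 / s powr (1/4)" by (simp add: inverse_eq_divide)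
  show "1 \<le> s powr (1/4)" by (rule ge_one_powr_ge_zero) (use s in auto)
qed

theorem proposition5p1:
  fixes a :: "real \<Rightarrow> real"
  assumes nonneg: "\<And>x. x \<ge> 0 \<Longrightarrow> a x \<ge> 0"
    and mono: "mono_on {0..} a"
  shows "\<exists>\<psi> :: real \<Rightarrow> real. mono_on {1..} \<psi> \<and> filterlim \<psi> at_top at_top \<and>
           (\<exists>C s0. \<forall>s\<ge>max 1 s0. \<forall>n::nat. real n + 1 \<le> sqrt s * \<psi> s \<longrightarrow>
              \<bar>admission_q a s n - admission_f a ((real n + 1) / sqrt s)\<bar>
                \<le> C * s powr (-1/4) * admission_f a ((real n + 1) / sqrt s))"
proof -
  define H where "H k = (1 + real k) * (1 + a (real k))^2" for k :: nat
  define T where "T s = {k. H k \<le> s powr (1/4)}" for s :: real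
  define \<psi> where "\<psi> s = real (Max (insert 0 (T s)))" for s
  have Hge: "1 + real k \<le> H k" for k
  proof -
    have "1 \<le> (1 + a (real k))^2" using nonneg[of "real k"] by simp
    hence hh: "(1 + real k) * 1 \<le> (1 + real k) * (1 + a (real k))^2" by (rule mult_left_mono) simp
    hence hh2: "1 + real k \<le> (1 + real k) * (1 + a (real k))^2" by (simp only: mult_1_right)
    show ?thesis unfolding H_def using hh2 by linarith
  qed
  have fin: "finite (T s)" for s
  proof (rule finite_subset)
    show "T s \<subseteq> {..nat \<lceil>s powr (1/4)\<rceil>}"
    proof
      fix k assume "k \<in> T s"
      hence "real k \<le> s powr (1/4)" using Hge[of k] unfolding T_def by auto
      hence "real k \<le> real (nat \<lceil>s powr (1/4)\<rceil>)" using real_nat_ceiling_ge[of "s powr (1/4)"] by linarith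
      thus "k \<in> {..nat \<lceil>s powr (1/4)\<rceil>}" by simp
    qed
  qed simp
  have Tmono: "T s \<subseteq> T t" if "0 \<le> s" "s \<le> t" for s t
    unfolding T_def using powr_mono2[of "1/4" s t] that by auto
  have psimono: "mono_on {1..} \<psi>"
  proof (rule mono_onI)
    fix s t :: real assume "s \<in> {1..}" "t \<in> {1..}" "s \<le> t"
    hence "insert 0 (T s) \<subseteq> insert 0 (T t)" using Tmono[of s t] by auto
    thus "\<psi> s \<le> \<psi> t" unfolding \<psi>_def using fin[of t] by (simp add: Max_mono)
  qed
  have lim: "filterlim \<psi> at_top at_top"
    unfolding filterlim_at_top
  proof
    fix Z :: real
    define K where "K = nat \<lceil>Z\<rceil>"
    have HK: "1 \<le> H K" using Hge[of K] by simp
    have "eventually (\<lambda>s. (H K)^4 \<le> s) at_top" by (rule eventually_ge_at_top)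
    thus "eventually (\<lambda>s. Z \<le> \<psi> s) at_top"
    proof (rule eventually_mono)
      fix s assume s: "(H K)^4 \<le> s"
      have "H K = H K powr (real 4 * (1/4))" using HK by simp
      also have "\<dots> = (H K powr (real 4)) powr (1/4)" by (simp only: powr_powr)
      also have "\<dots> = ((H K)^4) powr (1/4)" using HK by (subst powr_realpow) auto
      also have "\<dots> \<le> s powr (1/4)" using s by (intro powr_mono2) auto
      finally have "K \<in> T s" unfolding T_def by simp
      hence "K \<le> Max (insert 0 (T s))" using fin[of s] by (intro Max_ge) auto
      hence "real K \<le> \<psi> s" unfolding \<psi>_def by simp
      moreover have "Z \<le> real K" unfolding K_def using real_nat_ceiling_ge[of Z] .
      ultimately show "Z \<le> \<psi> s" by linarith
    qed
  qed
  have main: "\<forall>s\<ge>max 1 1. \<forall>n::nat. real n + 1 \<le> sqrt s * \<psi> s \<longrightarrow>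
              \<bar>admission_q a s n - admission_f a ((real n + 1) / sqrt s)\<bar>
                \<le> 2 * s powr (-1/4) * admission_f a ((real n + 1) / sqrt s)"
  proof (intro allI impI)
    fix s :: real and n :: nat
    assume s1: "s \<ge> max 1 1" and nb: "real n + 1 \<le> sqrt s * \<psi> s"
    have s: "1 \<le> s" using s1 by simp
    define r where "r = s powr (1/4)"
    define del where "del = s powr (-1/4)"
    have rf: "sqrt s = r^2" "del = 1/r" "1 \<le> r" using r_facts[OF s] unfolding r_def del_def by auto
    define m where "m = Max (insert 0 (T s))"
    have psim: "\<psi> s = real m" unfolding \<psi>_def m_def by simp
    have m0: "m \<noteq> 0"
    proof
      assume "m = 0"
      hence "real n + 1 \<le> 0" using nb psim by simp
      thus False by simp
    qed
    have "m \<in> insert 0 (T s)" unfolding m_def using fin[of s] by (intro Max_in) auto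
    hence mT: "H m \<le> r" using m0 unfolding T_def r_def by auto
    define h where "h = 1 / sqrt s"
    have sq: "0 < sqrt s" using s by simp
    have h0: "0 < h" unfolding h_def using sq by simp
    have hr: "h = 1 / r^2" unfolding h_def using rf(1) by simp
    have xm: "(real n + 1) * h \<le> real m"
    proof -
      have "(real n + 1) * h = (real n + 1) / sqrt s" unfolding h_def by simp
      also have "\<dots> \<le> real m" using nb psim sq by (simp add: divide_le_eq mult.commute)
      finally show ?thesis .
    qed
    have amn: "0 \<le> a (real m)" using nonneg by simp
    have am1: "a (real m) \<le> H m"
    proof -
      have "(1 + a (real m)) * 1 \<le> (1 + a (real m)) * (1 + a (real m))" using amn by (intro mult_left_mono) auto
      hence "1 + a (real m) \<le> (1 + a (real m))^2" by (simp add: power2_eq_square)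
      moreover have "1 * (1 + a (real m))^2 \<le> (1 + real m) * (1 + a (real m))^2" by (intro mult_right_mono) auto
      ultimately show ?thesis unfolding H_def by simp
    qed
    have am2: "real m * (a (real m))^2 \<le> H m"
      unfolding H_def using amn by (intro mult_mono power_mono) auto
    have rh: "r * h = del" using hr rf(2,3) by (simp add: power2_eq_square)
    have d1: "a (real m) * h \<le> del"
    proof -
      have "a (real m) * h \<le> r * h" using am1 mT h0 by (intro mult_right_mono) auto
      thus ?thesis using rh by simp
    qed
    have d2: "(real n + 1) * (a (real m) * h)^2 \<le> del"
    proof -
      have "(real n + 1) * (a (real m) * h)^2 = ((real n + 1) * h) * ((a (real m))^2 * h)"
        by (simp add: power2_eq_square)
      also have "\<dots> \<le> real m * ((a (real m))^2 * h)" using xm h0 by (intro mult_right_mono) auto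
      also have "\<dots> = (real m * (a (real m))^2) * h" by simp
      also have "\<dots> \<le> H m * h" using am2 h0 by (intro mult_right_mono) auto
      also have "\<dots> \<le> r * h" using mT h0 by (intro mult_right_mono) auto
      finally show ?thesis using rh by simp
    qed
    have d3: "del \<le> 1" using rf(2,3) by simp
    have E: "\<bar>(\<Prod>k\<in>{0..n}. inverse (1 + a ((real k + 1) * h) * h)) - exp (- integral {0..(real n + 1) * h} a)\<bar>
     \<le> 2 * del * exp (- integral {0..(real n + 1) * h} a)"
      by (rule est[OF nonneg mono h0 xm d1 d2 d3])
    show "\<bar>admission_q a s n - admission_f a ((real n + 1) / sqrt s)\<bar>
                \<le> 2 * s powr (-1/4) * admission_f a ((real n + 1) / sqrt s)"
      using E unfolding admission_q_def admission_f_def del_def h_def by simp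
  qed
  show ?thesis
    apply (rule exI[of _ \<psi>])
    apply (intro conjI psimono lim)
    apply (rule exI[of _ 2], rule exI[of _ 1])
    by (rule main)
qed

end
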